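(* Let $X,Y\subseteq\mathbb{P}^n$ be real closed subschemes such that $X\cap Y=\operatorname{Span}(X)\cap\operatorname{Span}(Y)$. Let $f\in\mathbb{R}[X\cup Y]_2$ and suppose that the restrictions $f|_X\in\mathbb{R}[X]_2$ and $f|_Y\in\mathbb{R}[Y]_2$ are each a sum of at most $r$ squares of linear forms in $\mathbb{R}[X]$ and $\mathbb{R}[Y]$ respectively. Then $f$ is a sum of at most $r$ squares of linear forms in $\mathbb{R}[X\cup Y]$.
   Context: For a subscheme $Z\subseteq\mathbb{P}^n$ with homogeneous ideal $I(Z)\subseteq\mathbb{R}[x_0,\dots,x_n]$, $\mathbb{R}[Z]=\mathbb{R}[x_0,\dots,x_n]/I(Z)$; $X\cup Y$ is defined by $I(X)\cap I(Y)$, and restriction maps $\mathbb{R}[X\cup Y]\to\mathbb{R}[X]$, $\mathbb{R}[X\cup Y]\to\mathbb{R}[Y]$ are the natural quotient maps. $\operatorname{Span}(Z)$ is the smallest projective linear subspace containing $Z$. *)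

theory Defs
  imports Complex_Main "HOL-Library.Poly_Mapping"
begin

type_synonym mpoly = "(nat \<Rightarrow>\<^sub>0 nat) \<Rightarrow>\<^sub>0 real"

definition mdeg :: "(nat \<Rightarrow>\<^sub>0 nat) \<Rightarrow> nat" where
  "mdeg m = (\<Sum>i\<in>Poly_Mapping.keys m. Poly_Mapping.lookup m i)"

definition polyring :: "nat \<Rightarrow> mpoly set" where
  "polyring n = {p. \<forall>m\<in>Poly_Mapping.keys p. \<forall>i\<in>Poly_Mapping.keys m. i \<le> n}"

definition homog :: "nat \<Rightarrow> mpoly \<Rightarrow> bool" where
  "homog d p \<longleftrightarrow> (\<forall>m\<in>Poly_Mapping.keys p. mdeg m = d)"

definition hcomp :: "nat \<Rightarrow> mpoly \<Rightarrow> mpoly" where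
  "hcomp d p = Abs_poly_mapping (\<lambda>m. if mdeg m = d then Poly_Mapping.lookup p m else 0)"

definition is_ideal :: "nat \<Rightarrow> mpoly set \<Rightarrow> bool" where
  "is_ideal n I \<longleftrightarrow> I \<subseteq> polyring n \<and> 0 \<in> I \<and>
     (\<forall>p\<in>I. \<forall>q\<in>I. p + q \<in> I) \<and>
     (\<forall>p\<in>I. \<forall>q\<in>polyring n. q * p \<in> I)"

definition homogeneous_ideal :: "nat \<Rightarrow> mpoly set \<Rightarrow> bool" where
  "homogeneous_ideal n I \<longleftrightarrow> is_ideal n I \<and> (\<forall>p\<in>I. \<forall>d. hcomp d p \<in> I)"

definition ideal_gen :: "nat \<Rightarrow> mpoly set \<Rightarrow> mpoly set" where
  "ideal_gen n S = \<Inter>{J. is_ideal n J \<and> S \<subseteq> J}"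

text \<open>Saturation (I : m^\<infinity>) with respect to the irrelevant ideal m = (x_0,...,x_n).\<close>
definition saturation :: "nat \<Rightarrow> mpoly set \<Rightarrow> mpoly set" where
  "saturation n I = {p \<in> polyring n. \<exists>k. \<forall>m. mdeg m = k \<and> (\<forall>i\<in>Poly_Mapping.keys m. i \<le> n)
      \<longrightarrow> Poly_Mapping.single m 1 * p \<in> I}"

text \<open>Closed subschemes of P^n are represented by their (saturated homogeneous) ideals I(Z).\<close>
definition subscheme_ideal :: "nat \<Rightarrow> mpoly set \<Rightarrow> bool" where
  "subscheme_ideal n I \<longleftrightarrow> homogeneous_ideal n I \<and> saturation n I = I"

definition linear_form :: "nat \<Rightarrow> mpoly \<Rightarrow> bool" where
  "linear_form n l \<longleftrightarrow> l \<in> polyring n \<and> homog 1 l"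

text \<open>Ideal of Span(Z): generated by the linear forms vanishing on Z.\<close>
definition span_ideal :: "nat \<Rightarrow> mpoly set \<Rightarrow> mpoly set" where
  "span_ideal n I = ideal_gen n {l \<in> I. linear_form n l}"

text \<open>Ideal of the scheme-theoretic intersection of the schemes with ideals I, J.\<close>
definition inter_ideal :: "nat \<Rightarrow> mpoly set \<Rightarrow> mpoly set \<Rightarrow> mpoly set" where
  "inter_ideal n I J = saturation n (ideal_gen n (I \<union> J))"

text \<open>The class of F in R[Z] = R[x]/I is a sum of at most r squares of linear forms of R[Z].\<close>
definition sos_lin_mod :: "nat \<Rightarrow> mpoly set \<Rightarrow> nat \<Rightarrow> mpoly \<Rightarrow> bool" where
  "sos_lin_mod n I r F \<longleftrightarrow> (\<exists>ls. length ls \<le> r \<and> (\<forall>l\<in>set ls. linear_form n l) \<and>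
      F - (\<Sum>l\<leftarrow>ls. l * l) \<in> I)"

end

theory Submission
  imports Defs
begin



definition C :: "real \<Rightarrow> mpoly" where "C c = Poly_Mapping.single 0 c"
definition Xv :: "nat \<Rightarrow> mpoly" where "Xv i = Poly_Mapping.single (Poly_Mapping.single i 1) 1"
definition mono :: "(nat \<Rightarrow> real) \<Rightarrow> (nat \<Rightarrow>\<^sub>0 nat) \<Rightarrow> real" where
  "mono x m = (\<Prod>i\<in>Poly_Mapping.keys m. x i ^ Poly_Mapping.lookup m i)"
definition ev :: "(nat \<Rightarrow> real) \<Rightarrow> mpoly \<Rightarrow> real" where
  "ev x p = (\<Sum>m\<in>Poly_Mapping.keys p. Poly_Mapping.lookup p m * mono x m)"

lemma mono_superset: "finite S \<Longrightarrow> Poly_Mapping.keys m \<subseteq> S \<Longrightarrow>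
   mono x m = (\<Prod>i\<in>S. x i ^ Poly_Mapping.lookup m i)"
  unfolding mono_def
  by (rule prod.mono_neutral_left) (auto simp: in_keys_iff)

lemma mono_add: "mono x (a + b) = mono x a * mono x b"
proof -
  let ?S = "Poly_Mapping.keys a \<union> Poly_Mapping.keys b"
  have "mono x (a+b) = (\<Prod>i\<in>?S. x i ^ Poly_Mapping.lookup (a+b) i)"
    using keys_add[of a b] by (intro mono_superset) auto
  also have "\<dots> = (\<Prod>i\<in>?S. x i ^ Poly_Mapping.lookup a i) * (\<Prod>i\<in>?S. x i ^ Poly_Mapping.lookup b i)"
    by (simp add: lookup_add power_add prod.distrib)
  also have "\<dots> = mono x a * mono x b"
    by (subst (1 2) mono_superset[of ?S]) auto
  finally show ?thesis .
qed

lemma mono_zero[simp]: "mono x 0 = 1" by (simp add: mono_def)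

lemma mono_single[simp]: "mono x (Poly_Mapping.single i k) = x i ^ k"
  by (simp add: mono_def)

lemma ev_superset: "finite S \<Longrightarrow> Poly_Mapping.keys p \<subseteq> S \<Longrightarrow>
   ev x p = (\<Sum>m\<in>S. Poly_Mapping.lookup p m * mono x m)"
  unfolding ev_def
  by (rule sum.mono_neutral_left) (auto simp: in_keys_iff)

lemma ev_add: "ev x (p + q) = ev x p + ev x q"
proof -
  let ?S = "Poly_Mapping.keys p \<union> Poly_Mapping.keys q"
  have "ev x (p+q) = (\<Sum>m\<in>?S. Poly_Mapping.lookup (p+q) m * mono x m)"
    using keys_add[of p q] by (intro ev_superset) auto
  also have "\<dots> = (\<Sum>m\<in>?S. Poly_Mapping.lookup p m * mono x m) + (\<Sum>m\<in>?S. Poly_Mapping.lookup q m * mono x m)"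
    by (simp add: lookup_add distrib_right sum.distrib)
  also have "\<dots> = ev x p + ev x q"
    by (subst (1 2) ev_superset[of ?S]) auto
  finally show ?thesis .
qed

lemma ev_zero[simp]: "ev x 0 = 0" by (simp add: ev_def)

lemma ev_uminus: "ev x (- p) = - ev x p"
  using ev_add[of x p "-p"] by simp

lemma ev_diff: "ev x (p - q) = ev x p - ev x q"
  using ev_add[of x p "-q"] ev_uminus[of x q] by simp

lemma ev_sum: "ev x (sum f A) = (\<Sum>a\<in>A. ev x (f a))"
  by (induction A rule: infinite_finite_induct) (auto simp: ev_add)

lemma ev_single[simp]: "ev x (Poly_Mapping.single m c) = c * mono x m"
  by (simp add: ev_def)

lemma pm_expand: "(p::mpoly) = (\<Sum>m\<in>Poly_Mapping.keys p. Poly_Mapping.single m (Poly_Mapping.lookup p m))"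
proof (rule poly_mapping_eqI)
  fix k
  show "Poly_Mapping.lookup p k = Poly_Mapping.lookup (\<Sum>m\<in>Poly_Mapping.keys p. Poly_Mapping.single m (Poly_Mapping.lookup p m)) k"
    by (simp add: lookup_sum lookup_single when_def in_keys_iff)
qed

lemma ev_mult: "ev x (p * q) = ev x p * ev x q"
proof -
  have "p * q = (\<Sum>a\<in>Poly_Mapping.keys p. \<Sum>b\<in>Poly_Mapping.keys q.
        Poly_Mapping.single a (Poly_Mapping.lookup p a) * Poly_Mapping.single b (Poly_Mapping.lookup q b))"
    by (subst (1) pm_expand, subst (1) pm_expand[of q]) (simp add: sum_distrib_left sum_distrib_right sum.swap[of _ "Poly_Mapping.keys q"])
  then have "ev x (p*q) = (\<Sum>a\<in>Poly_Mapping.keys p. \<Sum>b\<in>Poly_Mapping.keys q.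
        (Poly_Mapping.lookup p a * mono x a) * (Poly_Mapping.lookup q b * mono x b))"
    by (simp add: ev_sum mult_single mono_add mult_ac)
  also have "\<dots> = ev x p * ev x q"
    by (simp add: ev_def sum_distrib_left sum_distrib_right sum.swap[of _ "Poly_Mapping.keys q"])
  finally show ?thesis .
qed

lemma ev_C[simp]: "ev x (C c) = c" by (simp add: C_def)
lemma ev_Xv[simp]: "ev x (Xv i) = x i" by (simp add: Xv_def)

lemma C_mult: "C (a*b) = C a * C b" by (simp add: C_def mult_single)
lemma C_add: "C (a+b) = C a + C b" by (simp add: C_def single_add)
lemma C_diff: "C (a-b) = C a - C b" by (simp add: C_def single_diff)
lemma C_sum: "C (sum f A) = (\<Sum>a\<in>A. C (f a))"
  by (induction A rule: infinite_finite_induct) (auto simp: C_add, simp_all add: C_def single_add)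
lemma C_one[simp]: "C 1 = 1" by (simp add: C_def)
lemma C_zero[simp]: "C 0 = 0" by (simp add: C_def)

lemma lookup_C_mult: "Poly_Mapping.lookup (C c * p) m = c * Poly_Mapping.lookup p m"
  unfolding C_def mult_map_scale_conv_mult[symmetric]
  by (simp add: Poly_Mapping.map.rep_eq when_def)




lemma polyring_add: "p \<in> polyring n \<Longrightarrow> q \<in> polyring n \<Longrightarrow> p + q \<in> polyring n"
  unfolding polyring_def using keys_add[of p q] by blast
lemma polyring_uminus: "p \<in> polyring n \<Longrightarrow> - p \<in> polyring n"
  unfolding polyring_def by simp
lemma polyring_diff: "p \<in> polyring n \<Longrightarrow> q \<in> polyring n \<Longrightarrow> p - q \<in> polyring n"
  unfolding polyring_def using keys_diff[of p q] by blast
lemma polyring_zero[simp]: "0 \<in> polyring n" unfolding polyring_def by simp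
lemma polyring_mult: "p \<in> polyring n \<Longrightarrow> q \<in> polyring n \<Longrightarrow> p * q \<in> polyring n"
  unfolding polyring_def mem_Collect_eq
proof (intro ballI)
  fix m i assume p: "\<forall>m\<in>Poly_Mapping.keys p. \<forall>i\<in>Poly_Mapping.keys m. i \<le> n"
    and q: "\<forall>m\<in>Poly_Mapping.keys q. \<forall>i\<in>Poly_Mapping.keys m. i \<le> n"
    and m: "m \<in> Poly_Mapping.keys (p*q)" and i: "i \<in> Poly_Mapping.keys m"
  from m keys_mult[of p q] obtain a b where "m = a + b" "a \<in> Poly_Mapping.keys p" "b \<in> Poly_Mapping.keys q" by blast
  with i keys_add[of a b] p q show "i \<le> n" by blast
qed
lemma polyring_sum: "(\<And>a. a \<in> A \<Longrightarrow> f a \<in> polyring n) \<Longrightarrow> sum f A \<in> polyring n"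
  by (induction A rule: infinite_finite_induct) (auto intro: polyring_add)
lemma polyring_C[simp]: "C c \<in> polyring n" unfolding polyring_def C_def by simp
lemma polyring_Xv: "i \<le> n \<Longrightarrow> Xv i \<in> polyring n" unfolding polyring_def Xv_def by simp
lemma polyring_mon: "(\<forall>i\<in>Poly_Mapping.keys m. i \<le> n) \<Longrightarrow> Poly_Mapping.single m 1 \<in> polyring n"
  unfolding polyring_def by simp

lemma C_mult_uminus: "C (-1) * p = - p"
  by (simp add: C_def single_uminus)

lemma ideal_mult: "is_ideal n I \<Longrightarrow> p \<in> I \<Longrightarrow> q \<in> polyring n \<Longrightarrow> q * p \<in> I"
  unfolding is_ideal_def by blast
lemma ideal_add: "is_ideal n I \<Longrightarrow> p \<in> I \<Longrightarrow> q \<in> I \<Longrightarrow> p + q \<in> I"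
  unfolding is_ideal_def by blast
lemma ideal_zero: "is_ideal n I \<Longrightarrow> 0 \<in> I"
  unfolding is_ideal_def by blast
lemma ideal_sub: "is_ideal n I \<Longrightarrow> I \<subseteq> polyring n"
  unfolding is_ideal_def by blast
lemma ideal_uminus: "is_ideal n I \<Longrightarrow> p \<in> I \<Longrightarrow> - p \<in> I"
  using ideal_mult[of n I p "C (-1)"] by (simp add: C_mult_uminus)
lemma ideal_diff: "is_ideal n I \<Longrightarrow> p \<in> I \<Longrightarrow> q \<in> I \<Longrightarrow> p - q \<in> I"
  using ideal_add[of n I p "-q"] ideal_uminus[of n I q] by simp
lemma ideal_sum: "is_ideal n I \<Longrightarrow> (\<And>a. a \<in> A \<Longrightarrow> f a \<in> I) \<Longrightarrow> sum f A \<in> I"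
  by (induction A rule: infinite_finite_induct) (auto intro: ideal_add ideal_zero)

lemma ideal_gen_sub: "is_ideal n J \<Longrightarrow> S \<subseteq> J \<Longrightarrow> ideal_gen n S \<subseteq> J"
  unfolding ideal_gen_def by blast

lemma mdeg1: assumes "mdeg m = 1" shows "\<exists>i. m = Poly_Mapping.single i 1"
proof -
  have ne: "Poly_Mapping.keys m \<noteq> {}" using assms by (auto simp: mdeg_def)
  then obtain i where i: "i \<in> Poly_Mapping.keys m" by blast
  have fin: "finite (Poly_Mapping.keys m)" by simp
  have "mdeg m = Poly_Mapping.lookup m i + (\<Sum>j\<in>Poly_Mapping.keys m - {i}. Poly_Mapping.lookup m j)"
    unfolding mdeg_def using i fin by (simp add: sum.remove)
  moreover have "Poly_Mapping.lookup m i \<ge> 1" using i by (simp add: in_keys_iff)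
  ultimately have a: "Poly_Mapping.lookup m i = 1" and
    b: "(\<Sum>j\<in>Poly_Mapping.keys m - {i}. Poly_Mapping.lookup m j) = 0" using assms by auto
  from b have "\<forall>j\<in>Poly_Mapping.keys m - {i}. Poly_Mapping.lookup m j = 0" using fin by simp
  then have "Poly_Mapping.keys m = {i}" using i by (auto simp: in_keys_iff)
  then have "m = Poly_Mapping.single i 1"
  proof (intro poly_mapping_eqI)
    fix k assume K: "Poly_Mapping.keys m = {i}"
    show "Poly_Mapping.lookup m k = Poly_Mapping.lookup (Poly_Mapping.single i 1) k"
    proof (cases "k = i")
      case True then show ?thesis using a by simp
    next
      case False
      then have "k \<notin> Poly_Mapping.keys m" using K by simp
      then show ?thesis using False by (simp add: not_in_keys_iff_lookup_eq_zero lookup_single_not_eq)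
    qed
  qed
  then show ?thesis by blast
qed

lemma mdeg_single1: "mdeg (Poly_Mapping.single i 1) = 1" by (simp add: mdeg_def)
lemma mdeg_single1': "mdeg (Poly_Mapping.single i (Suc 0)) = Suc 0" by (simp add: mdeg_def)
lemma single1_inj': "Poly_Mapping.single i (Suc 0) = Poly_Mapping.single j (Suc 0) \<longleftrightarrow> i = j"
  by (metis lookup_single_eq lookup_single_not_eq zero_neq_one One_nat_def)

definition M1 :: "nat \<Rightarrow> (nat \<Rightarrow>\<^sub>0 nat) set" where
  "M1 n = {Poly_Mapping.single i 1 | i. i \<le> n}"

lemma linear_form_iff: "linear_form n l \<longleftrightarrow> Poly_Mapping.keys l \<subseteq> M1 n"
proof
  assume "linear_form n l"
  show "Poly_Mapping.keys l \<subseteq> M1 n"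
  proof
    fix m assume m: "m \<in> Poly_Mapping.keys l"
    from \<open>linear_form n l\<close> m have "mdeg m = 1" unfolding linear_form_def homog_def by blast
    then obtain i where i: "m = Poly_Mapping.single i 1" using mdeg1 by blast
    from \<open>linear_form n l\<close> m have "i \<le> n" unfolding linear_form_def polyring_def i by simp
    then show "m \<in> M1 n" unfolding M1_def i by blast
  qed
next
  assume "Poly_Mapping.keys l \<subseteq> M1 n"
  then show "linear_form n l"
    unfolding linear_form_def polyring_def homog_def M1_def
    by (auto simp: mdeg_single1')
qed

lemma lin_add: "linear_form n p \<Longrightarrow> linear_form n q \<Longrightarrow> linear_form n (p + q)"
  unfolding linear_form_iff using keys_add[of p q] by blast
lemma lin_diff: "linear_form n p \<Longrightarrow> linear_form n q \<Longrightarrow> linear_form n (p - q)"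
  unfolding linear_form_iff using keys_diff[of p q] by blast
lemma lin_zero[simp]: "linear_form n 0"
  unfolding linear_form_iff by simp
lemma lin_C: "linear_form n p \<Longrightarrow> linear_form n (C c * p)"
  unfolding linear_form_iff by (auto simp: in_keys_iff lookup_C_mult)
lemma lin_sum: "(\<And>a. a \<in> A \<Longrightarrow> linear_form n (f a)) \<Longrightarrow> linear_form n (sum f A)"
  by (induction A rule: infinite_finite_induct) (auto intro: lin_add)
lemma lin_polyring: "linear_form n p \<Longrightarrow> p \<in> polyring n"
  unfolding linear_form_def by simp
lemma lin_Xv: "i \<le> n \<Longrightarrow> linear_form n (Xv i)"
  unfolding linear_form_iff Xv_def M1_def by auto

lemma C_Xv: "C c * Xv i = Poly_Mapping.single (Poly_Mapping.single i 1) c"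
  by (simp add: C_def Xv_def mult_single)

lemma single1_inj: "Poly_Mapping.single i (1::nat) = Poly_Mapping.single j 1 \<longleftrightarrow> i = j"
  by (metis lookup_single_eq lookup_single_not_eq zero_neq_one)

lemma lin_repr: assumes "linear_form n l"
  shows "l = (\<Sum>i\<le>n. C (Poly_Mapping.lookup l (Poly_Mapping.single i 1)) * Xv i)"
proof (rule poly_mapping_eqI)
  fix m
  have K: "Poly_Mapping.keys l \<subseteq> M1 n" using assms linear_form_iff by blast
  have R: "Poly_Mapping.lookup (\<Sum>i\<le>n. C (Poly_Mapping.lookup l (Poly_Mapping.single i 1)) * Xv i) m
     = (\<Sum>i\<le>n. if m = Poly_Mapping.single i 1 then Poly_Mapping.lookup l m else 0)"
    by (auto simp: C_Xv lookup_sum lookup_single when_def intro!: sum.cong)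
  show "Poly_Mapping.lookup l m = Poly_Mapping.lookup (\<Sum>i\<le>n. C (Poly_Mapping.lookup l (Poly_Mapping.single i 1)) * Xv i) m"
  proof (cases "\<exists>j\<le>n. m = Poly_Mapping.single j 1")
    case True
    then obtain j where j: "j \<le> n" "m = Poly_Mapping.single j 1" by blast
    have "(\<Sum>i\<le>n. if m = Poly_Mapping.single i 1 then Poly_Mapping.lookup l m else 0)
        = (\<Sum>i\<in>{j}. if m = Poly_Mapping.single i 1 then Poly_Mapping.lookup l m else 0)"
      by (rule sum.mono_neutral_right) (use j in \<open>auto simp: single1_inj single1_inj'\<close>)
    then show ?thesis using R j(2) by simp
  next
    case False
    then have "m \<notin> Poly_Mapping.keys l" using K unfolding M1_def by blast
    then show ?thesis using R False by (auto simp: in_keys_iff intro!: sum.neutral)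
  qed
qed

lemma ev_lin: assumes "linear_form n l"
  shows "ev x l = (\<Sum>i\<le>n. Poly_Mapping.lookup l (Poly_Mapping.single i 1) * x i)"
  by (subst lin_repr[OF assms]) (simp add: ev_sum ev_mult)

lemma ev_lin_add: "linear_form n l \<Longrightarrow> ev (\<lambda>i. x i + y i) l = ev x l + ev y l"
  by (simp add: ev_lin distrib_left sum.distrib)

lemma ev_lin_zero: "linear_form n l \<Longrightarrow> (\<forall>i\<le>n. x i = 0) \<Longrightarrow> ev x l = 0"
  by (simp add: ev_lin)




interpretation PV: vector_space "\<lambda>c (p::mpoly). C c * p"
  by unfold_locales (auto simp: distrib_left C_add C_mult distrib_right mult.assoc)

lemma ideal_subspace: "is_ideal n I \<Longrightarrow> PV.subspace I"
  unfolding PV.subspace_def by (auto intro: ideal_zero ideal_add ideal_mult)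

lemma lin_subspace: "PV.subspace {l. linear_form n l}"
  unfolding PV.subspace_def by (auto intro: lin_add lin_C)

lemma span_lin: "\<forall>a\<in>L. linear_form n a \<Longrightarrow> g \<in> PV.span L \<Longrightarrow> linear_form n g"
  using PV.span_minimal[OF _ lin_subspace, of L n] by blast

lemma lin_in_span: assumes "linear_form n g" "Xv ` {..n} \<subseteq> PV.span B"
  shows "g \<in> PV.span B"
  by (subst lin_repr[OF assms(1)], rule PV.span_sum, rule PV.span_scale) (use assms(2) in auto)

lemma points_exist:
  fixes L :: "mpoly set"
  assumes L: "\<forall>a\<in>L. linear_form n a"
  obtains P where "finite P" "\<forall>x\<in>P. \<forall>a\<in>L. ev x a = 0"
    "\<And>g. linear_form n g \<Longrightarrow> (\<forall>x\<in>P. ev x g = 0) \<Longrightarrow> g \<in> PV.span L"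
proof -
  obtain BW where BW: "BW \<subseteq> L" "PV.independent BW" "L \<subseteq> PV.span BW"
    using PV.maximal_independent_subset by blast
  obtain B where B: "BW \<subseteq> B" "B \<subseteq> BW \<union> Xv ` {..n}" "PV.independent B" "BW \<union> Xv ` {..n} \<subseteq> PV.span B"
    using PV.maximal_independent_subset_extend[of BW "BW \<union> Xv ` {..n}"] BW(2) by blast
  define pt where "pt b = (\<lambda>i. PV.representation B (Xv i) b)" for b
  define P where "P = pt ` (B - BW)"
  have XvB: "Xv ` {..n} \<subseteq> PV.span B" using B(4) by blast
  have key: "ev (pt b) g = PV.representation B g b" if g: "linear_form n g" for g b
  proof -
    have "PV.representation B g b = PV.representation B
        (\<Sum>i\<le>n. C (Poly_Mapping.lookup g (Poly_Mapping.single i 1)) * Xv i) b"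
      by (subst lin_repr[OF g]) simp
    also have "\<dots> = (\<Sum>i\<le>n. Poly_Mapping.lookup g (Poly_Mapping.single i 1) * PV.representation B (Xv i) b)"
      using XvB B(3)
      by (subst PV.representation_sum) (auto intro!: sum.cong PV.span_scale simp: PV.representation_scale)
    also have "\<dots> = ev (pt b) g" by (simp add: ev_lin[OF g] pt_def)
    finally show ?thesis by simp
  qed
  show ?thesis
  proof
    show "finite P" unfolding P_def
      by (rule finite_imageI, rule finite_subset[of _ "Xv ` {..n}"]) (use B(2) in auto)
    show "\<forall>x\<in>P. \<forall>a\<in>L. ev x a = 0"
    proof (intro ballI)
      fix x a assume x: "x \<in> P" and a: "a \<in> L"
      then obtain b where b: "b \<in> B" "b \<notin> BW" "x = pt b" unfolding P_def by blast
      have "ev x a = PV.representation B a b" using key L a b by simp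
      also have "\<dots> = PV.representation BW a b"
        using PV.representation_extend[OF B(3), of a BW] BW(3) a B(1) by auto
      also have "\<dots> = 0" using PV.representation_ne_zero b(2) by blast
      finally show "ev x a = 0" .
    qed
    fix g assume g: "linear_form n g" and z: "\<forall>x\<in>P. ev x g = 0"
    have gB: "g \<in> PV.span B" using lin_in_span[OF g XvB] .
    have rz: "PV.representation B g b \<noteq> 0 \<Longrightarrow> b \<in> BW" for b
    proof (rule ccontr)
      assume ne: "PV.representation B g b \<noteq> 0" and nb: "b \<notin> BW"
      then have "b \<in> B" using PV.representation_ne_zero by blast
      then have "pt b \<in> P" using nb unfolding P_def by blast
      then have "ev (pt b) g = 0" using z by blast
      then show False using key[OF g] ne by simp
    qed
    have "g = (\<Sum>b | PV.representation B g b \<noteq> 0. C (PV.representation B g b) * b)"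
      using PV.sum_nonzero_representation_eq[OF B(3) gB] by simp
    also have "\<dots> \<in> PV.span BW"
      by (rule PV.span_sum, rule PV.span_scale, rule PV.span_base) (use rz in auto)
    finally show "g \<in> PV.span L" using PV.span_mono[OF BW(1)] by blast
  qed
qed




lemma ev_sumsq: "ev x (\<Sum>i<r. v i * v i) = (\<Sum>i<r. (ev x (v i))^2)"
  by (simp add: ev_sum ev_mult power2_eq_square)

lemma reflect_step:
  fixes r n :: nat and l v :: "nat \<Rightarrow> mpoly" and \<Lambda> :: "(nat \<Rightarrow> real) set"
  assumes linl: "\<forall>i<r. linear_form n (l i)" and linv: "\<forall>i<r. linear_form n (v i)"
    and H: "\<forall>x\<in>\<Lambda>. (\<Sum>i<r. (ev x (l i))^2) = (\<Sum>i<r. (ev x (v i))^2)"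
    and cl: "\<forall>x\<in>\<Lambda>. \<forall>y\<in>\<Lambda>. (\<lambda>i. x i + y i) \<in> \<Lambda>"
    and p: "p \<in> \<Lambda>" and Q: "Q \<subseteq> \<Lambda>"
    and agree: "\<forall>q\<in>Q. \<forall>i<r. ev q (v i) = ev q (l i)"
  shows "\<exists>v'. (\<forall>i<r. linear_form n (v' i)) \<and> (\<Sum>i<r. v' i * v' i) = (\<Sum>i<r. v i * v i)
     \<and> (\<forall>q\<in>insert p Q. \<forall>i<r. ev q (v' i) = ev q (l i))"
proof -
  define a where "a i = ev p (l i)" for i
  define b where "b i = ev p (v i)" for i
  define w where "w i = b i - a i" for i
  define W where "W = (\<Sum>i<r. (w i)^2)"
  have Hp: "(\<Sum>i<r. (a i)^2) = (\<Sum>i<r. (b i)^2)" using H p unfolding a_def b_def by blast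
  show ?thesis
  proof (cases "W = 0")
    case True
    then have "\<forall>i<r. w i = 0" unfolding W_def by (simp add: sum_nonneg_eq_0_iff)
    then have "\<forall>i<r. ev p (v i) = ev p (l i)" unfolding w_def a_def b_def by simp
    then show ?thesis using linv agree by blast
  next
    case False
    define k where "k = 2 / W"
    define s where "s = (\<Sum>j<r. C (w j) * v j)"
    define v' where "v' i = v i - C (k * w i) * s" for i
    have kW: "k * W = 2" using False unfolding k_def by simp
    have evs: "ev x s = (\<Sum>j<r. w j * ev x (v j))" for x
      unfolding s_def by (simp add: ev_sum ev_mult)
    have ev': "ev x (v' i) = ev x (v i) - k * w i * ev x s" for x i
      unfolding v'_def by (simp add: ev_diff ev_mult)
    have lin': "\<forall>i<r. linear_form n (v' i)"
      unfolding v'_def s_def using linv by (auto intro!: lin_diff lin_C lin_sum)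
    have e1: "(v i - C (k * w i) * s) * (v i - C (k * w i) * s)
       = v i * v i - 2 * s * (C (k * w i) * v i) + s * s * C (k * w i * (k * w i))" for i
      unfolding C_mult by (simp add: algebra_simps)
    have e2: "(\<Sum>i<r. C (k * w i) * v i) = C k * s"
      unfolding s_def C_mult by (simp add: sum_distrib_left mult.assoc)
    have e3: "(\<Sum>i<r. k * w i * (k * w i)) = 2 * k"
    proof -
      have "(\<Sum>i<r. k * w i * (k * w i)) = k * (k * W)"
        unfolding W_def by (simp add: sum_distrib_left power2_eq_square mult_ac)
      then show ?thesis using kW by simp
    qed
    have C2n: "C 2 = 2" by (simp add: C_def)
    have C2: "C (2 * k) = 2 * C k" by (simp only: C_mult C2n)
    have poly: "(\<Sum>i<r. v' i * v' i) = (\<Sum>i<r. v i * v i)"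
    proof -
      have "(\<Sum>i<r. v' i * v' i) = (\<Sum>i<r. v i * v i) - 2 * s * (\<Sum>i<r. C (k * w i) * v i)
          + s * s * C (\<Sum>i<r. k * w i * (k * w i))"
        unfolding v'_def e1 by (simp add: sum.distrib sum_subtractf sum_distrib_left C_sum)
      also have "\<dots> = (\<Sum>i<r. v i * v i)" unfolding e2 e3 C2 by (simp add: algebra_simps)
      finally show ?thesis .
    qed
    have Wexp: "W = (\<Sum>i<r. (b i)^2) - 2 * (\<Sum>i<r. a i * b i) + (\<Sum>i<r. (a i)^2)"
      unfolding W_def w_def
      by (simp add: power2_diff sum.distrib sum_subtractf sum_distrib_left algebra_simps)
    have wb: "(\<Sum>j<r. w j * b j) = W / 2"
    proof -
      have "(\<Sum>j<r. w j * b j) = (\<Sum>i<r. (b i)^2) - (\<Sum>i<r. a i * b i)"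
        unfolding w_def by (simp add: algebra_simps power2_eq_square sum_subtractf)
      then show ?thesis using Wexp Hp by simp
    qed
    have atp: "\<forall>i<r. ev p (v' i) = ev p (l i)"
    proof (intro allI impI)
      fix i assume "i < r"
      have "ev p (v' i) = b i - k * w i * (W / 2)" using ev' evs wb unfolding b_def by simp
      also have "\<dots> = b i - w i" using kW by (simp add: algebra_simps)
      finally show "ev p (v' i) = ev p (l i)" unfolding w_def a_def by simp
    qed
    have atQ: "\<forall>q\<in>Q. \<forall>i<r. ev q (v' i) = ev q (l i)"
    proof (intro ballI allI impI)
      fix q i assume q: "q \<in> Q" and i: "i < r"
      define c where "c j = ev q (l j)" for j
      have cv: "\<forall>j<r. ev q (v j) = c j" using agree q unfolding c_def by simp
      have pq: "(\<lambda>j. p j + q j) \<in> \<Lambda>" using cl p Q q by blast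
      have Hpq: "(\<Sum>j<r. (a j + c j)^2) = (\<Sum>j<r. (b j + c j)^2)"
      proof -
        have "(\<Sum>j<r. (ev (\<lambda>j. p j + q j) (l j))^2) = (\<Sum>j<r. (ev (\<lambda>j. p j + q j) (v j))^2)"
          using H pq by blast
        moreover have "(\<Sum>j<r. (ev (\<lambda>j. p j + q j) (l j))^2) = (\<Sum>j<r. (a j + c j)^2)"
          using linl by (auto intro!: sum.cong simp: ev_lin_add a_def c_def)
        moreover have "(\<Sum>j<r. (ev (\<lambda>j. p j + q j) (v j))^2) = (\<Sum>j<r. (b j + c j)^2)"
          using linv cv by (auto intro!: sum.cong simp: ev_lin_add b_def)
        ultimately show ?thesis by simp
      qed
      have "(\<Sum>j<r. (a j + c j)^2) = (\<Sum>j<r. (a j)^2) + 2 * (\<Sum>j<r. a j * c j) + (\<Sum>j<r. (c j)^2)"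
        by (simp add: power2_sum sum.distrib sum_distrib_left algebra_simps)
      moreover have "(\<Sum>j<r. (b j + c j)^2) = (\<Sum>j<r. (b j)^2) + 2 * (\<Sum>j<r. b j * c j) + (\<Sum>j<r. (c j)^2)"
        by (simp add: power2_sum sum.distrib sum_distrib_left algebra_simps)
      ultimately have "(\<Sum>j<r. a j * c j) = (\<Sum>j<r. b j * c j)" using Hpq Hp by simp
      then have wc: "(\<Sum>j<r. w j * c j) = 0"
        unfolding w_def by (simp add: algebra_simps sum_subtractf)
      have "ev q s = (\<Sum>j<r. w j * c j)" using evs cv by simp
      then have "ev q s = 0" using wc by simp
      then show "ev q (v' i) = ev q (l i)" using ev' cv i unfolding c_def by simp
    qed
    show ?thesis using lin' poly atp atQ by blast
  qed
qed

lemma reflect_all: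
  fixes r n :: nat and l m :: "nat \<Rightarrow> mpoly" and \<Lambda> :: "(nat \<Rightarrow> real) set"
  assumes linl: "\<forall>i<r. linear_form n (l i)" and linm: "\<forall>i<r. linear_form n (m i)"
    and H: "\<forall>x\<in>\<Lambda>. (\<Sum>i<r. (ev x (l i))^2) = (\<Sum>i<r. (ev x (m i))^2)"
    and cl: "\<forall>x\<in>\<Lambda>. \<forall>y\<in>\<Lambda>. (\<lambda>i. x i + y i) \<in> \<Lambda>"
    and P: "finite P" "P \<subseteq> \<Lambda>"
  shows "\<exists>v. (\<forall>i<r. linear_form n (v i)) \<and> (\<Sum>i<r. v i * v i) = (\<Sum>i<r. m i * m i)
     \<and> (\<forall>q\<in>P. \<forall>i<r. ev q (v i) = ev q (l i))"
  using P
proof (induction P rule: finite_induct)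
  case empty
  then show ?case using linm by blast
next
  case (insert p F)
  then obtain v where v: "\<forall>i<r. linear_form n (v i)" "(\<Sum>i<r. v i * v i) = (\<Sum>i<r. m i * m i)"
     "\<forall>q\<in>F. \<forall>i<r. ev q (v i) = ev q (l i)" by blast
  have Hv: "\<forall>x\<in>\<Lambda>. (\<Sum>i<r. (ev x (l i))^2) = (\<Sum>i<r. (ev x (v i))^2)"
  proof
    fix x assume "x \<in> \<Lambda>"
    then have "(\<Sum>i<r. (ev x (l i))^2) = ev x (\<Sum>i<r. m i * m i)" using H ev_sumsq[where x=x and r=r and v=m] by simp
    also have "\<dots> = (\<Sum>i<r. (ev x (v i))^2)" using v(2) ev_sumsq[where x=x and r=r and v=v] by simp
    finally show "(\<Sum>i<r. (ev x (l i))^2) = (\<Sum>i<r. (ev x (v i))^2)" .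
  qed
  obtain v' where v': "\<forall>i<r. linear_form n (v' i)" "(\<Sum>i<r. v' i * v' i) = (\<Sum>i<r. v i * v i)"
     "\<forall>q\<in>insert p F. \<forall>i<r. ev q (v' i) = ev q (l i)"
    using reflect_step[OF linl v(1) Hv cl, of p F] insert.prems v(3) by auto
  have "(\<Sum>i<r. v' i * v' i) = (\<Sum>i<r. m i * m i)" using v'(2) v(2) by simp
  then show ?case using v'(1,3) by blast
qed




lemma pad_sum:
  assumes "length ls \<le> r"
  shows "(\<Sum>i<r. (if i < length ls then ls!i else 0) * (if i < length ls then ls!i else (0::mpoly)))
       = (\<Sum>l\<leftarrow>ls. l * l)"
proof -
  have "(\<Sum>i<r. (if i < length ls then ls!i else 0) * (if i < length ls then ls!i else (0::mpoly)))
      = (\<Sum>i<length ls. ls!i * ls!i)"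
    by (rule sum.mono_neutral_cong_right) (use assms in auto)
  also have "\<dots> = (\<Sum>l\<leftarrow>ls. l * l)"
    by (simp add: sum_list_sum_nth atLeast0LessThan)
  finally show ?thesis .
qed

lemma list_sum_map: "(\<Sum>l\<leftarrow>map k [0..<r]. l * l) = (\<Sum>i<r. k i * k i)"
  by (simp add: interv_sum_list_conv_sum_set_nat atLeast0LessThan comp_def)

lemma sos_fun:
  assumes "sos_lin_mod n I r F"
  obtains l where "\<forall>i<r. linear_form n (l i)" "F - (\<Sum>i<r. l i * l i) \<in> I"
proof -
  obtain ls where ls: "length ls \<le> r" "\<forall>l\<in>set ls. linear_form n l" "F - (\<Sum>l\<leftarrow>ls. l * l) \<in> I"
    using assms unfolding sos_lin_mod_def by blast
  define l where "l i = (if i < length ls then ls!i else 0)" for i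
  have "\<forall>i<r. linear_form n (l i)" using ls(2) unfolding l_def by auto
  moreover have "F - (\<Sum>i<r. l i * l i) \<in> I" using ls(3) pad_sum[OF ls(1)] unfolding l_def by simp
  ultimately show ?thesis using that by blast
qed

lemma mdeg0: assumes "mdeg m = 0" shows "m = 0"
proof -
  have "\<forall>i\<in>Poly_Mapping.keys m. Poly_Mapping.lookup m i = 0"
    using assms by (simp add: mdeg_def)
  then show ?thesis
    by (intro poly_mapping_eqI) (metis lookup_zero not_in_keys_iff_lookup_eq_zero)
qed

lemma mdeg_single: "mdeg (Poly_Mapping.single i k) = k"
  by (simp add: mdeg_def)

lemma ev_ideal: "is_ideal n {p \<in> polyring n. \<forall>x\<in>\<Lambda>. ev x p = 0}"
  unfolding is_ideal_def
proof (intro conjI ballI)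
  show "{p \<in> polyring n. \<forall>x\<in>\<Lambda>. ev x p = 0} \<subseteq> polyring n" by blast
  show "0 \<in> {p \<in> polyring n. \<forall>x\<in>\<Lambda>. ev x p = 0}" by simp
  fix p assume p: "p \<in> {p \<in> polyring n. \<forall>x\<in>\<Lambda>. ev x p = 0}"
  { fix q assume q: "q \<in> {p \<in> polyring n. \<forall>x\<in>\<Lambda>. ev x p = 0}"
    show "p + q \<in> {p \<in> polyring n. \<forall>x\<in>\<Lambda>. ev x p = 0}"
      using p q polyring_add[of p n q] by (simp add: ev_add) }
  { fix q assume q: "q \<in> polyring n"
    show "q * p \<in> {p \<in> polyring n. \<forall>x\<in>\<Lambda>. ev x p = 0}"
      using p q polyring_mult[of q n p] by (simp add: ev_mult) }
qed


lemma in_ideal_gen: "p \<in> polyring n \<Longrightarrow> (\<And>J. is_ideal n J \<Longrightarrow> S \<subseteq> J \<Longrightarrow> p \<in> J) \<Longrightarrow> p \<in> ideal_gen n S"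
  unfolding ideal_gen_def by blast

lemma in_saturation: "p \<in> polyring n \<Longrightarrow> p \<in> I \<Longrightarrow> p \<in> saturation n I"
  unfolding saturation_def
  by (auto intro!: exI[of _ 0] dest!: mdeg0)

theorem theorem5p2:
  fixes n r :: nat and IX IY :: "mpoly set" and F :: mpoly
  assumes "subscheme_ideal n IX" and "subscheme_ideal n IY"
    and "inter_ideal n IX IY = inter_ideal n (span_ideal n IX) (span_ideal n IY)"
    and "F \<in> polyring n" and "homog 2 F"
    and "sos_lin_mod n IX r F" and "sos_lin_mod n IY r F"
  shows "sos_lin_mod n (IX \<inter> IY) r F"
proof -
  have IX: "is_ideal n IX" using assms(1) unfolding subscheme_ideal_def homogeneous_ideal_def by blast
  have IY: "is_ideal n IY" using assms(2) unfolding subscheme_ideal_def homogeneous_ideal_def by blast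
  obtain l where l: "\<forall>i<r. linear_form n (l i)" "F - (\<Sum>i<r. l i * l i) \<in> IX"
    using sos_fun[OF assms(6)] by blast
  obtain m where m: "\<forall>i<r. linear_form n (m i)" "F - (\<Sum>i<r. m i * m i) \<in> IY"
    using sos_fun[OF assms(7)] by blast
  define LX where "LX = {a \<in> IX. linear_form n a}"
  define LY where "LY = {a \<in> IY. linear_form n a}"
  define L where "L = LX \<union> LY"
  have Llin: "\<forall>a\<in>L. linear_form n a" unfolding L_def LX_def LY_def by blast
  obtain P where P: "finite P" "\<forall>x\<in>P. \<forall>a\<in>L. ev x a = 0"
    "\<And>g. linear_form n g \<Longrightarrow> (\<forall>x\<in>P. ev x g = 0) \<Longrightarrow> g \<in> PV.span L"
    using points_exist[OF Llin] by blast
  define \<Lambda> where "\<Lambda> = {x. \<forall>a\<in>L. ev x a = 0}"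
  have PL: "P \<subseteq> \<Lambda>" using P(2) unfolding \<Lambda>_def by blast
  have cl: "\<forall>x\<in>\<Lambda>. \<forall>y\<in>\<Lambda>. (\<lambda>i. x i + y i) \<in> \<Lambda>"
    unfolding \<Lambda>_def
  proof (intro ballI, simp only: mem_Collect_eq, intro ballI)
    fix x y a assume "\<forall>a\<in>L. ev x a = 0" "\<forall>a\<in>L. ev y a = 0" "a \<in> L"
    then show "ev (\<lambda>i. x i + y i) a = 0" using Llin ev_lin_add[of n a x y] by simp
  qed
  define D where "D = (\<Sum>i<r. l i * l i) - (\<Sum>i<r. m i * m i)"
  have Deq: "D = (F - (\<Sum>i<r. m i * m i)) - (F - (\<Sum>i<r. l i * l i))"
    unfolding D_def by simp
  have Dpoly: "D \<in> polyring n"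
    unfolding Deq using l(2) m(2) ideal_sub[OF IX] ideal_sub[OF IY] by (blast intro: polyring_diff)
  have "D \<in> ideal_gen n (IX \<union> IY)"
  proof (rule in_ideal_gen[OF Dpoly])
    fix J assume J: "is_ideal n J" "IX \<union> IY \<subseteq> J"
    show "D \<in> J" unfolding Deq using J l(2) m(2) by (blast intro: ideal_diff)
  qed
  then have "D \<in> inter_ideal n IX IY" unfolding inter_ideal_def using Dpoly by (rule in_saturation[rotated])
  then have "D \<in> saturation n (ideal_gen n (span_ideal n IX \<union> span_ideal n IY))"
    using assms(3) unfolding inter_ideal_def by simp
  then obtain k where k: "\<And>mm. mdeg mm = k \<Longrightarrow> (\<forall>i\<in>Poly_Mapping.keys mm. i \<le> n)
      \<Longrightarrow> Poly_Mapping.single mm 1 * D \<in> ideal_gen n (span_ideal n IX \<union> span_ideal n IY)"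
    unfolding saturation_def by blast
  define K where "K = {p \<in> polyring n. \<forall>x\<in>\<Lambda>. ev x p = 0}"
  have K: "is_ideal n K" unfolding K_def by (rule ev_ideal)
  have LK: "L \<subseteq> K" unfolding K_def \<Lambda>_def using Llin lin_polyring by blast
  have "span_ideal n IX \<subseteq> K" unfolding span_ideal_def
    by (rule ideal_gen_sub[OF K]) (use LK in \<open>auto simp: L_def LX_def\<close>)
  moreover have "span_ideal n IY \<subseteq> K" unfolding span_ideal_def
    by (rule ideal_gen_sub[OF K]) (use LK in \<open>auto simp: L_def LY_def\<close>)
  ultimately have genK: "ideal_gen n (span_ideal n IX \<union> span_ideal n IY) \<subseteq> K"
    by (intro ideal_gen_sub[OF K]) auto
  have evD: "ev x D = (\<Sum>i<r. (ev x (l i))^2) - (\<Sum>i<r. (ev x (m i))^2)" for x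
    unfolding D_def by (simp add: ev_diff ev_sumsq)
  have H: "\<forall>x\<in>\<Lambda>. (\<Sum>i<r. (ev x (l i))^2) = (\<Sum>i<r. (ev x (m i))^2)"
  proof
    fix x assume x: "x \<in> \<Lambda>"
    show "(\<Sum>i<r. (ev x (l i))^2) = (\<Sum>i<r. (ev x (m i))^2)"
    proof (cases "\<exists>i\<le>n. x i \<noteq> 0")
      case True
      then obtain i where i: "i \<le> n" "x i \<noteq> 0" by blast
      have "Poly_Mapping.single (Poly_Mapping.single i k) 1 * D \<in> K"
        using k[of "Poly_Mapping.single i k"] i(1) genK by (auto simp: mdeg_single)
      then have "ev x (Poly_Mapping.single (Poly_Mapping.single i k) 1 * D) = 0"
        using x unfolding K_def by blast
      then have "x i ^ k * ev x D = 0" by (simp add: ev_mult)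
      then have "ev x D = 0" using i(2) by simp
      then show ?thesis using evD by simp
    next
      case False
      then have "\<forall>i\<le>n. x i = 0" by blast
      then have "\<forall>i<r. ev x (l i) = 0 \<and> ev x (m i) = 0" using l(1) m(1) ev_lin_zero by blast
      then show ?thesis by simp
    qed
  qed
  obtain v where v: "\<forall>i<r. linear_form n (v i)" "(\<Sum>i<r. v i * v i) = (\<Sum>i<r. m i * m i)"
    "\<forall>q\<in>P. \<forall>i<r. ev q (v i) = ev q (l i)"
    using reflect_all[OF l(1) m(1) H cl P(1) PL] by blast
  have "\<forall>i. \<exists>ab. i < r \<longrightarrow> l i - v i = fst ab + snd ab \<and> fst ab \<in> PV.span LX \<and> snd ab \<in> PV.span LY"
  proof (intro allI impI)
    fix i
    show "\<exists>ab. i < r \<longrightarrow> l i - v i = fst ab + snd ab \<and> fst ab \<in> PV.span LX \<and> snd ab \<in> PV.span LY"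
    proof (cases "i < r")
      case True
      have "linear_form n (l i - v i)" using l(1) v(1) True by (simp add: lin_diff)
      moreover have "\<forall>x\<in>P. ev x (l i - v i) = 0" using v(3) True by (simp add: ev_diff)
      ultimately have "l i - v i \<in> PV.span L" using P(3) by blast
      then obtain a b where "l i - v i = a + b" "a \<in> PV.span LX" "b \<in> PV.span LY"
        unfolding L_def PV.span_Un by blast
      then show ?thesis by (intro exI[of _ "(a, b)"]) simp
    qed simp
  qed
  then obtain ab where ab: "\<And>i. i < r \<Longrightarrow> l i - v i = fst (ab i) + snd (ab i) \<and> fst (ab i) \<in> PV.span LX \<and> snd (ab i) \<in> PV.span LY"
    by metis
  define a where "a i = fst (ab i)" for i
  define b where "b i = snd (ab i)" for i
  have spX: "PV.span LX \<subseteq> IX" by (rule PV.span_minimal[OF _ ideal_subspace[OF IX]]) (auto simp: LX_def)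
  have spY: "PV.span LY \<subseteq> IY" by (rule PV.span_minimal[OF _ ideal_subspace[OF IY]]) (auto simp: LY_def)
  have aX: "a i \<in> IX" and bY: "b i \<in> IY" and alin: "linear_form n (a i)" and blin: "linear_form n (b i)"
    and lab: "l i - v i = a i + b i" if "i < r" for i
  proof -
    have *: "l i - v i = a i + b i" "a i \<in> PV.span LX" "b i \<in> PV.span LY"
      using ab[OF that] unfolding a_def b_def by auto
    show "a i \<in> IX" using *(2) spX by blast
    show "b i \<in> IY" using *(3) spY by blast
    show "linear_form n (a i)" using span_lin[of LX n] *(2) unfolding LX_def by blast
    show "linear_form n (b i)" using span_lin[of LY n] *(3) unfolding LY_def by blast
    show "l i - v i = a i + b i" using *(1) .
  qed
  define kk where "kk i = l i - a i" for i
  have kklin: "\<forall>i<r. linear_form n (kk i)" unfolding kk_def using l(1) alin by (simp add: lin_diff)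
  have kkv: "kk i = v i + b i" if "i < r" for i
    using lab[OF that] unfolding kk_def by (simp add: algebra_simps)
  have inX: "F - (\<Sum>i<r. kk i * kk i) \<in> IX"
  proof -
    have "F - (\<Sum>i<r. kk i * kk i) = (F - (\<Sum>i<r. l i * l i)) + (\<Sum>i<r. (l i + kk i) * a i)"
    proof -
      have "(\<Sum>i<r. (l i + kk i) * a i) = (\<Sum>i<r. l i * l i - kk i * kk i)"
        unfolding kk_def by (intro sum.cong) (auto simp: algebra_simps)
      then show ?thesis by (simp add: sum_subtractf)
    qed
    also have "\<dots> \<in> IX"
    proof (rule ideal_add[OF IX l(2)], rule ideal_sum[OF IX])
      fix i assume "i \<in> {..<r}"
      then show "(l i + kk i) * a i \<in> IX"
        using aX l(1) kklin by (auto intro!: ideal_mult[OF IX] polyring_add lin_polyring lin_add)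
    qed
    finally show ?thesis .
  qed
  have inY: "F - (\<Sum>i<r. kk i * kk i) \<in> IY"
  proof -
    have "F - (\<Sum>i<r. kk i * kk i) = (F - (\<Sum>i<r. m i * m i)) - (\<Sum>i<r. (kk i + v i) * b i)"
    proof -
      have "(\<Sum>i<r. (kk i + v i) * b i) = (\<Sum>i<r. kk i * kk i - v i * v i)"
        using kkv by (intro sum.cong) (auto simp: algebra_simps)
      then show ?thesis using v(2) by (simp add: sum_subtractf)
    qed
    also have "\<dots> \<in> IY"
    proof (rule ideal_diff[OF IY m(2)], rule ideal_sum[OF IY])
      fix i assume "i \<in> {..<r}"
      then show "(kk i + v i) * b i \<in> IY"
        using bY v(1) kklin by (auto intro!: ideal_mult[OF IY] polyring_add lin_polyring lin_add)
    qed
    finally show ?thesis .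
  qed
  show ?thesis unfolding sos_lin_mod_def
  proof (intro exI[of _ "map kk [0..<r]"] conjI)
    show "length (map kk [0..<r]) \<le> r" by simp
    show "\<forall>l\<in>set (map kk [0..<r]). linear_form n l" using kklin by auto
    show "F - (\<Sum>l\<leftarrow>map kk [0..<r]. l * l) \<in> IX \<inter> IY"
      unfolding list_sum_map using inX inY by blast
  qed
qed


end
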